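(* Let $m,L,T$ be positive integers with $T \ge (m+1)L-1$, let $k$ be an integer, and let $u_{k-T},u_{k-T+1},\dots,u_k \in \mathbb{R}^m$. Suppose that the signal $u_{[k-T,k-1]}$ is persistently exciting of order $L$. Write the Hankel matrix of $u_{[k-T+1,k]}$ in block form $$\mathcal{H}_L(u_{[k-T+1,k]}) = \begin{bmatrix} H_{11,k} & H_{12,k}\\ H_{21,k} & u_k\end{bmatrix}$$ as described in the context. Then: (i) $\operatorname{rank}\begin{bmatrix} H_{11,k} & H_{12,k}\end{bmatrix} = mL-m$, i.e. $\begin{bmatrix} H_{11,k} & H_{12,k}\end{bmatrix}$ has linearly independent rows; (ii) $mL-1 \le \operatorname{rank}\begin{bmatrix} H_{11,k}\\ H_{21,k}\end{bmatrix} \le mL$; (iii) $mL-1 \le \operatorname{rank}\,\mathcal{H}_L(u_{[k-T+1,k]}) \le mL$.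
   Context: For vectors $u_i\in\mathbb{R}^m$, $u_{[i,j]}$ denotes the stacked vector $(u_i^\top,\dots,u_j^\top)^\top \in \mathbb{R}^{(j-i+1)m}$. The (block) Hankel matrix of depth $L$ of a signal $u_{[k-T+1,k]}$ is the $mL\times(T-L+1)$ matrix $$\mathcal{H}_L(u_{[k-T+1,k]}) = \begin{bmatrix} u_{k-T+1} & u_{k-T+2} & \cdots & u_{k-L+1}\\ u_{k-T+2} & u_{k-T+3} & \cdots & u_{k-L+2}\\ \vdots & \vdots & & \vdots\\ u_{k-T+L} & u_{k-T+L+1} & \cdots & u_k\end{bmatrix},$$ whose $(i,j)$ block entry is $u_{k-T+i+j-1}$ ($i=1,\dots,L$, $j=1,\dots,T-L+1$). It is partitioned as $\begin{bmatrix} H_{11,k} & H_{12,k}\\ H_{21,k} & u_k\end{bmatrix}$, where $H_{11,k}\in\mathbb{R}^{m(L-1)\times(T-L)}$ consists of the first $m(L-1)$ rows and first $T-L$ columns, $H_{12,k}\in\mathbb{R}^{m(L-1)}$ is the first $m(L-1)$ entries of the last column, $H_{21,k}\in\mathbb{R}^{m\times(T-L)}$ is the last $m$ rows of the first $T-L$ columns, and the bottom-right block is $u_k$. The Hankel matrix of $u_{[k-T,k-1]}$ is defined analogously with all indices shifted by $-1$. A signal $u_{[s-T+1,s]}$ is persistently exciting of order $L$ if $\operatorname{rank}\mathcal{H}_L(u_{[s-T+1,s]}) = mL$. *)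

theory Defs
  imports "Jordan_Normal_Form.DL_Rank"
begin

text \<open>Block Hankel matrix of depth L of the signal u_[s-T+1, s], each u_j in R^m
  (a JNF vector of dimension m). The (i,j) block (0-based) is u_(s-T+1+i+j);
  row r belongs to block i = r div m, component r mod m.\<close>
definition hankel :: "nat \<Rightarrow> nat \<Rightarrow> nat \<Rightarrow> (int \<Rightarrow> real vec) \<Rightarrow> int \<Rightarrow> real mat" where
  "hankel m L T u s = mat (m * L) (T - L + 1)
     (\<lambda>(r, c). u (s - int T + 1 + int c + int (r div m)) $ (r mod m))"

definition top_rows :: "nat \<Rightarrow> 'a mat \<Rightarrow> 'a mat" where
  "top_rows p A = mat p (dim_col A) (\<lambda>(r, c). A $$ (r, c))"

definition left_cols :: "nat \<Rightarrow> 'a mat \<Rightarrow> 'a mat" where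
  "left_cols q A = mat (dim_row A) q (\<lambda>(r, c). A $$ (r, c))"

text \<open>Rank of a real matrix (dimension of its column space; equals row rank).\<close>
definition mrank :: "real mat \<Rightarrow> nat" where
  "mrank A = vec_space.rank (dim_row A) A"

definition persistently_exciting :: "nat \<Rightarrow> nat \<Rightarrow> nat \<Rightarrow> (int \<Rightarrow> real vec) \<Rightarrow> int \<Rightarrow> bool" where
  "persistently_exciting m L T u s \<longleftrightarrow> mrank (hankel m L T u s) = m * L"

end

theory Submission
  imports Defs
begin

context vec_space begin

lemma rank_mono_span:
  assumes A: "A \<in> carrier_mat n nc" and B: "B \<in> carrier_mat n nc'"
    and sub: "set (cols B) \<subseteq> span (set (cols A))"
  shows "rank B \<le> rank A"
proof -
  have sA: "subspace class_ring (span (set (cols A))) V"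
    using A by (metis cols_dim carrier_matD(1) span_is_subspace)
  have sB: "subspace class_ring (span (set (cols B))) V"
    using B by (metis cols_dim carrier_matD(1) span_is_subspace)
  have "span (set (cols B)) \<subseteq> span (set (cols A))"
    using sub A by (metis cols_dim carrier_matD(1) span_is_submodule span_is_subset)
  then have sub2: "subspace class_ring (span (set (cols B))) (vs (span (set (cols A))))"
    using nested_subspaces[OF sA sB] by blast
  show ?thesis unfolding rank_def
    using vectorspace.subspace_dim[OF subspace_is_vs[OF sA] sub2 fin_dim_span_cols[OF A]] fin_dim_span_cols[OF B]
    by auto
qed

lemma rank_one: "rank (1\<^sub>m n) = n"
  using det_rank_iff[of "1\<^sub>m n"] by simp

lemma rank_le_nr:
  assumes A: "A \<in> carrier_mat n nc"
  shows "rank A \<le> n"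
proof -
  have "set (cols A) \<subseteq> span (set (cols (1\<^sub>m n)))"
  proof
    fix v assume "v \<in> set (cols A)"
    then have v: "v \<in> carrier_vec n" using A cols_dim by blast
    have "1\<^sub>m n *\<^sub>v v = v" using v by simp
    then show "v \<in> span (set (cols (1\<^sub>m n)))"
      using col_space_eq[of "1\<^sub>m n" n] v unfolding col_space_def by auto
  qed
  then show ?thesis using rank_mono_span[OF _ A] rank_one by (metis one_carrier_mat)
qed

lemma rank_ge_nr:
  assumes A: "A \<in> carrier_mat n nc" and sp: "carrier_vec n \<subseteq> span (set (cols A))"
  shows "n \<le> rank A"
proof -
  have "set (cols (1\<^sub>m n)) \<subseteq> carrier_vec n" using cols_dim by (metis one_carrier_mat carrier_matD(1))
  then have "set (cols (1\<^sub>m n)) \<subseteq> span (set (cols A))" using sp by blast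
  from rank_mono_span[OF A one_carrier_mat this] show ?thesis using rank_one by simp
qed

lemma full_rank_span:
  assumes A: "A \<in> carrier_mat n nc" and r: "rank A = n"
  shows "carrier_vec n \<subseteq> span (set (cols A))"
proof -
  have lin0: "lin_indpt {}"
    by (metis (no_types) empty_subsetI fin_dim finite_basis_exists subset_li_is_li vec_vs vectorspace.basis_def)
  obtain U where U: "finite U" "maximal U (\<lambda>T. T \<subseteq> set (cols A) \<and> lin_indpt T)"
    using maximal_exists_superset[of "set (cols A)" "(\<lambda>T. T \<subseteq> set (cols A) \<and> lin_indpt T)" "{}"] lin0 by auto
  have cU: "card U = n" using rank_card_indpt[OF A U(2)] r by simp
  have Us: "U \<subseteq> set (cols A)" "lin_indpt U" using U(2) unfolding maximal_def by auto
  have Uc: "U \<subseteq> carrier V" using Us A cols_dim by (metis carrier_matD(1) subset_trans module_vec_simps(3))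
  have "basis U" by (rule dim_li_is_basis) (use U Uc Us cU dim_is_n in auto)
  then have "span U = carrier V" unfolding basis_def by auto
  moreover have "span U \<subseteq> span (set (cols A))" using span_is_monotone Us by metis
  ultimately show ?thesis by simp
qed


lemma span_img_iff:
  assumes A: "A \<in> carrier_mat n nc"
  shows "(y \<in> span (set (cols A))) = (y \<in> carrier_vec n \<and> (\<exists>x\<in>carrier_vec nc. A *\<^sub>v x = y))"
  using col_space_eq[OF A] A unfolding col_space_def by auto

lemma rank_mono_img:
  assumes A: "A \<in> carrier_mat n nc" and B: "B \<in> carrier_mat n nc'"
    and h: "\<And>c. c < nc' \<Longrightarrow> \<exists>x\<in>carrier_vec nc. A *\<^sub>v x = col B c"
  shows "rank B \<le> rank A"
proof (rule rank_mono_span[OF A B])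
  show "set (cols B) \<subseteq> span (set (cols A))"
  proof
    fix v assume "v \<in> set (cols B)"
    then obtain c where c: "c < nc'" "v = col B c" using B by (metis cols_length cols_nth in_set_conv_nth carrier_matD(2))
    then show "v \<in> span (set (cols A))" using h[OF c(1)] span_img_iff[OF A] B by auto
  qed
qed

lemma rank_ge_img:
  assumes A: "A \<in> carrier_mat n nc" and h: "\<And>y. y \<in> carrier_vec n \<Longrightarrow> \<exists>x\<in>carrier_vec nc. A *\<^sub>v x = y"
  shows "n \<le> rank A"
  using rank_ge_nr[OF A] h span_img_iff[OF A] by blast

lemma full_rank_img:
  assumes A: "A \<in> carrier_mat n nc" and r: "rank A = n" and y: "y \<in> carrier_vec n"
  shows "\<exists>x\<in>carrier_vec nc. A *\<^sub>v x = y"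
  using full_rank_span[OF A r] y span_img_iff[OF A] by blast
end

lemma mult_unit_col: "(A :: real mat) \<in> carrier_mat n nc \<Longrightarrow> j < nc \<Longrightarrow> A *\<^sub>v unit_vec nc j = col A j"
proof (rule eq_vecI)
  fix i assume "A \<in> carrier_mat n nc" "j < nc" "i < dim_vec (col A j)"
  moreover then have "row A i \<in> carrier_vec nc" by (auto simp: row_def)
  ultimately show "(A *\<^sub>v unit_vec nc j) $ i = col A j $ i"
    using scalar_prod_right_unit[of j nc "row A i"] by auto
qed auto

lemma hankel_dims[simp]: "dim_row (hankel m L T u s) = m * L" "dim_col (hankel m L T u s) = T - L + 1"
  by (simp_all add: hankel_def)

lemma hankel_idx: "r < m * L \<Longrightarrow> c < T - L + 1 \<Longrightarrow>
  hankel m L T u s $$ (r, c) = u (s - int T + 1 + int c + int (r div m)) $ (r mod m)"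
  by (simp add: hankel_def)

theorem lemma1:
  fixes m L T :: nat and k :: int and u :: "int \<Rightarrow> real vec"
  assumes "m > 0" and "L > 0" and "T > 0"
    and "T \<ge> (m + 1) * L - 1"
    and "\<And>j. k - int T \<le> j \<Longrightarrow> j \<le> k \<Longrightarrow> dim_vec (u j) = m"
    and "persistently_exciting m L T u (k - 1)"
  shows "mrank (top_rows (m * (L - 1)) (hankel m L T u k)) = m * L - m
    \<and> (m * L - 1 \<le> mrank (left_cols (T - L) (hankel m L T u k))
         \<and> mrank (left_cols (T - L) (hankel m L T u k)) \<le> m * L)
    \<and> (m * L - 1 \<le> mrank (hankel m L T u k) \<and> mrank (hankel m L T u k) \<le> m * L)"
proof -
  define n where "n = m * L"
  define nc where "nc = T - L + 1"
  define Ho where "Ho = hankel m L T u (k - 1)"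
  define H where "H = hankel m L T u k"
  define P where "P = top_rows (m * (L - 1)) H"
  define N where "N = left_cols (T - L) H"
  have LT: "L \<le> T" using assms(1,2,4) by (cases m) (auto simp: algebra_simps)
  have Odim: "Ho \<in> carrier_mat n nc" unfolding Ho_def n_def nc_def by (simp add: carrier_matI)
  have Hdim: "H \<in> carrier_mat n nc" unfolding H_def n_def nc_def by (simp add: carrier_matI)
  have Pdim: "P \<in> carrier_mat (m * (L - 1)) nc" unfolding P_def top_rows_def using Hdim by auto
  have Ndim: "N \<in> carrier_mat n (T - L)" unfolding N_def left_cols_def using Hdim by auto
  have rO: "vec_space.rank n Ho = n"
    using assms(6) unfolding persistently_exciting_def mrank_def Ho_def n_def by simp
  have HO1: "H $$ (r, c) = Ho $$ (r, Suc c)" if "r < n" "Suc c < nc" for r c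
    using that unfolding H_def Ho_def n_def nc_def by (simp add: hankel_idx algebra_simps)
  have HO2: "H $$ (r, c) = Ho $$ (r + m, c)" if "r + m < n" "c < nc" for r c
  proof -
    have "(r + m) div m = r div m + 1" "(r + m) mod m = r mod m" using assms(1) by auto
    then show ?thesis using that unfolding H_def Ho_def n_def nc_def by (simp add: hankel_idx algebra_simps)
  qed
  have nm: "m * (L - 1) = n - m" "m * (L - 1) + m = n" unfolding n_def using assms(2)
    by (simp_all add: diff_mult_distrib2)
  have "m * (L - 1) \<le> vec_space.rank (m * (L - 1)) P"
  proof (rule vec_space.rank_ge_img[OF Pdim])
    fix y' :: "real vec" assume y': "y' \<in> carrier_vec (m * (L - 1))"
    define y where "y = vec n (\<lambda>i. if i < m then 0 else y' $ (i - m))"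
    have "y \<in> carrier_vec n" unfolding y_def by simp
    then obtain x where x: "x \<in> carrier_vec nc" "Ho *\<^sub>v x = y"
      using vec_space.full_rank_img[OF Odim rO] by blast
    have "P *\<^sub>v x = y'"
    proof (rule eq_vecI)
      show "dim_vec (P *\<^sub>v x) = dim_vec y'" using Pdim y' by simp
      fix i assume "i < dim_vec y'"
      then have i: "i < m * (L - 1)" using y' by simp
      have "row P i = row Ho (i + m)"
        by (rule eq_vecI) (use i Pdim Odim nm HO2 in \<open>auto simp: P_def top_rows_def\<close>)
      then have "(P *\<^sub>v x) $ i = (Ho *\<^sub>v x) $ (i + m)" using i Pdim Odim nm by simp
      also have "\<dots> = y' $ i" using x i nm unfolding y_def by simp
      finally show "(P *\<^sub>v x) $ i = y' $ i" .
    qed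
    then show "\<exists>x\<in>carrier_vec nc. P *\<^sub>v x = y'" using x(1) by blast
  qed
  then have r1: "vec_space.rank (m * (L - 1)) P = m * (L - 1)"
    using vec_space.rank_le_nr[OF Pdim] by (meson le_antisym)
  define A where "A = mat n nc (\<lambda>(r, c). if c = 0 then Ho $$ (r, 0) else 0)"
  define B where "B = mat n nc (\<lambda>(r, c). if c = 0 then 0 else Ho $$ (r, c))"
  have Adim: "A \<in> carrier_mat n nc" and Bdim: "B \<in> carrier_mat n nc" unfolding A_def B_def by auto
  have "Ho = A + B"
    by (rule eq_matI) (use Odim in \<open>auto simp: A_def B_def\<close>)
  then have "vec_space.rank n Ho \<le> vec_space.rank n A + vec_space.rank n B"
    using vec_space.rank_subadditive[OF Adim Bdim] by simp
  moreover have "vec_space.rank n A \<le> 1"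
    by (rule vec_space.rank_le_1_product_entries[OF Adim, of "\<lambda>r. Ho $$ (r, 0)" "\<lambda>c. if c = 0 then 1 else 0"])
       (use Adim in \<open>auto simp: A_def\<close>)
  moreover have "vec_space.rank n B \<le> vec_space.rank n N"
  proof (rule vec_space.rank_mono_img[OF Ndim Bdim])
    fix c assume c: "c < nc"
    show "\<exists>x\<in>carrier_vec (T - L). N *\<^sub>v x = col B c"
    proof (cases c)
      case 0
      have "col B c = N *\<^sub>v 0\<^sub>v (T - L)"
        by (rule eq_vecI) (use c 0 Ndim Bdim in \<open>auto simp: B_def scalar_prod_def\<close>)
      then show ?thesis by force
    next
      case (Suc j)
      have j: "j < T - L" using c Suc unfolding nc_def by simp
      have "col B c = col N j"
        by (rule eq_vecI) (use c Suc Ndim Bdim HO1 j in \<open>auto simp: B_def N_def left_cols_def nc_def\<close>)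
      then show ?thesis using mult_unit_col[OF Ndim j] j by force
    qed
  qed
  ultimately have r2: "n - 1 \<le> vec_space.rank n N" using rO by linarith
  have r3: "vec_space.rank n N \<le> vec_space.rank n H"
  proof (rule vec_space.rank_mono_img[OF Hdim Ndim])
    fix c assume c: "c < T - L"
    have cc: "c < nc" using c unfolding nc_def by simp
    have "col N c = col H c"
      by (rule eq_vecI) (use c cc Ndim Hdim in \<open>auto simp: N_def left_cols_def\<close>)
    then show "\<exists>x\<in>carrier_vec nc. H *\<^sub>v x = col N c" using mult_unit_col[OF Hdim cc] cc by force
  qed
  have u2: "vec_space.rank n N \<le> n" using vec_space.rank_le_nr[OF Ndim] .
  have u3: "vec_space.rank n H \<le> n" using vec_space.rank_le_nr[OF Hdim] .
  have dP: "dim_row P = m * (L - 1)" "dim_row N = n" "dim_row H = n" using Pdim Ndim Hdim by auto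
  show ?thesis
    unfolding mrank_def P_def[symmetric] N_def[symmetric] H_def[symmetric] dP n_def[symmetric]
    using r1 r2 r3 u2 u3 nm by auto
qed
end
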